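(* For $i=1,2$ let $\sigma_i=(h_i:M_i:x_i:y_i:r_i)\in X\subseteq\mathbb{P}^{16}_{\mathbb{C}}$. Consider the tuple $$\big(h_1h_2 : M_1M_2 : M_2^t x_1+h_1x_2 : h_2y_1+M_1y_2 : h_2r_1+h_1r_2-2\langle x_1,y_2\rangle\big)$$ (matrices and vectors replaced by their entries). If $h_1\neq 0$ or $h_2\neq 0$, then not all entries of this tuple vanish, i.e. it defines a point of $\mathbb{P}^{16}_{\mathbb{C}}$.
   Context: Write a direct isometry of $\mathbb{R}^3$ as $v\mapsto Mv+y$ with $M\in SO(3)$, $y\in\mathbb{R}^3$. Put $x=-M^ty$ and $r=\langle y,y\rangle$. Identify the isometry with the point $(h:M:x:y:r)=(1:m_{11}:\dots:m_{33}:x_1:x_2:x_3:y_1:y_2:y_3:r)$ of $\mathbb{P}^{16}_{\mathbb{C}}$; the coordinates are $h$, the nine entries of $M$, $x$, $y$ and $r$. The variety $X\subseteq\mathbb{P}^{16}_{\mathbb{C}}$ is the complexification of the Zariski closure of the image of the group of direct isometries under this map. Equivalently, it is the complex zero set of all real polynomials vanishing on that image. Here $\langle u,u'\rangle=u^tu'$ is the complex bilinear (not Hermitian) form on $\mathbb{C}^3$. When both points are direct isometries, the tuple is the point of the composition of the two isometries. *)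

theory Defs
  imports "HOL-Analysis.Analysis"
begin

datatype rpoly = Const real | Var nat | Add rpoly rpoly | Mul rpoly rpoly

fun peval :: "rpoly \<Rightarrow> (nat \<Rightarrow> complex) \<Rightarrow> complex" where
  "peval (Const c) z = complex_of_real c"
| "peval (Var i) z = z i"
| "peval (Add p q) z = peval p z + peval q z"
| "peval (Mul p q) z = peval p z * peval q z"

definition homogeneous :: "rpoly \<Rightarrow> bool" where
  "homogeneous p \<longleftrightarrow> (\<exists>d::nat. \<forall>t z. peval p (\<lambda>i. t * z i) = t ^ d * peval p z)"

definition coords :: "complex \<Rightarrow> complex^3^3 \<Rightarrow> complex^3 \<Rightarrow> complex^3 \<Rightarrow> complex \<Rightarrow> nat \<Rightarrow> complex" where
  "coords h M x y r i =
     (if i < 17 then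
       [h, M$1$1, M$1$2, M$1$3, M$2$1, M$2$2, M$2$3, M$3$1, M$3$2, M$3$3,
        x$1, x$2, x$3, y$1, y$2, y$3, r] ! i
      else 0)"

text \<open>Complex bilinear (non-Hermitian) form on C^3.\<close>
definition bil :: "complex^3 \<Rightarrow> complex^3 \<Rightarrow> complex" where
  "bil u v = (\<Sum>i\<in>UNIV. u$i * v$i)"

definition cmat :: "real^3^3 \<Rightarrow> complex^3^3" where
  "cmat M = (\<chi> i j. complex_of_real (M$i$j))"

definition cvec :: "real^3 \<Rightarrow> complex^3" where
  "cvec v = (\<chi> i. complex_of_real (v$i))"

text \<open>Direct isometries v \<mapsto> M v + y with M \<in> SO(3).\<close>
definition direct_isometry :: "real^3^3 \<Rightarrow> real^3 \<Rightarrow> bool" where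
  "direct_isometry M y \<longleftrightarrow> transpose M ** M = mat 1 \<and> det M = 1"

definition iso_coords :: "real^3^3 \<Rightarrow> real^3 \<Rightarrow> nat \<Rightarrow> complex" where
  "iso_coords M y = coords 1 (cmat M) (cvec (- (transpose M *v y))) (cvec y)
                      (complex_of_real (y \<bullet> y))"

text \<open>A real homogeneous polynomial vanishes on the (projective) image iff it vanishes
  on these affine representatives.\<close>
definition vanishes_on_image :: "rpoly \<Rightarrow> bool" where
  "vanishes_on_image p \<longleftrightarrow>
     (\<forall>M y. direct_isometry M y \<longrightarrow> peval p (iso_coords M y) = 0)"

text \<open>Membership of the tuple (h:M:x:y:r) in X \<subseteq> P^16_C: a nonzero tuple at which
  every real homogeneous polynomial vanishing on the image vanishes.\<close>
definition inX :: "complex \<Rightarrow> complex^3^3 \<Rightarrow> complex^3 \<Rightarrow> complex^3 \<Rightarrow> complex \<Rightarrow> bool" where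
  "inX h M x y r \<longleftrightarrow>
     \<not> (h = 0 \<and> M = 0 \<and> x = 0 \<and> y = 0 \<and> r = 0) \<and>
     (\<forall>p. homogeneous p \<and> vanishes_on_image p \<longrightarrow> peval p (coords h M x y r) = 0)"

end

theory Submission
  imports Defs
begin

definition ix :: "3 \<Rightarrow> nat" where
  "ix a = (if a = 1 then 0 else if a = 2 then 1 else 2)"

definition mv :: "3 \<Rightarrow> 3 \<Rightarrow> rpoly" where
  "mv a b = Var (1 + 3 * ix a + ix b)"

definition PA :: "3 \<Rightarrow> 3 \<Rightarrow> rpoly" where
  "PA i j = Add (Add (Add (Mul (mv 1 i) (mv 1 j)) (Mul (mv 2 i) (mv 2 j))) (Mul (mv 3 i) (mv 3 j)))
     (Mul (Const (if i = j then -1 else 0)) (Mul (Var 0) (Var 0)))"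

definition PB :: "3 \<Rightarrow> 3 \<Rightarrow> rpoly" where
  "PB i j = Add (Add (Add (Mul (mv i 1) (mv j 1)) (Mul (mv i 2) (mv j 2))) (Mul (mv i 3) (mv j 3)))
     (Mul (Const (if i = j then -1 else 0)) (Mul (Var 0) (Var 0)))"

lemma coords_mv: "coords h M x y r (1 + 3 * ix a + ix b) = M$a$b"
  using exhaust_3[of a] exhaust_3[of b]
  by (auto simp: coords_def ix_def numeral_eq_Suc)

lemma coords_0: "coords h M x y r 0 = h"
  by (simp add: coords_def)

lemma peval_PA: "peval (PA i j) (coords h M x y r) =
   M$1$i * M$1$j + M$2$i * M$2$j + M$3$i * M$3$j - (if i = j then h*h else 0)"
  unfolding PA_def mv_def peval.simps coords_mv coords_0 by simp

lemma peval_PB: "peval (PB i j) (coords h M x y r) =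
   M$i$1 * M$j$1 + M$i$2 * M$j$2 + M$i$3 * M$j$3 - (if i = j then h*h else 0)"
  unfolding PB_def mv_def peval.simps coords_mv coords_0 by simp

lemma hom_PA: "homogeneous (PA i j)"
  unfolding homogeneous_def
  by (rule exI[of _ 2]) (simp add: PA_def mv_def power2_eq_square algebra_simps)

lemma hom_PB: "homogeneous (PB i j)"
  unfolding homogeneous_def
  by (rule exI[of _ 2]) (simp add: PB_def mv_def power2_eq_square algebra_simps)

lemma van_PA: "vanishes_on_image (PA i j)"
  unfolding vanishes_on_image_def
proof (intro allI impI)
  fix M :: "real^3^3" and y assume "direct_isometry M y"
  hence o: "transpose M ** M = mat 1" by (simp add: direct_isometry_def)
  have "(transpose M ** M)$i$j = M$1$i * M$1$j + M$2$i * M$2$j + M$3$i * M$3$j"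
    by (simp add: matrix_matrix_mult_def transpose_def sum_3)
  hence e: "M$1$i * M$1$j + M$2$i * M$2$j + M$3$i * M$3$j = (if i = j then 1 else 0)"
    using o by (simp add: mat_def)
  have e': "(of_real (M$1$i) * of_real (M$1$j) + of_real (M$2$i) * of_real (M$2$j) + of_real (M$3$i) * of_real (M$3$j) :: complex) = (if i = j then 1 else 0)"
    by (simp only: of_real_mult[symmetric] of_real_add[symmetric] e) simp
  show "peval (PA i j) (iso_coords M y) = 0"
    unfolding iso_coords_def peval_PA
    using e' by (simp add: cmat_def)
qed

lemma van_PB: "vanishes_on_image (PB i j)"
  unfolding vanishes_on_image_def
proof (intro allI impI)
  fix M :: "real^3^3" and y assume "direct_isometry M y"
  hence o: "transpose M ** M = mat 1" by (simp add: direct_isometry_def)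
  hence "M ** transpose M = mat 1"
    using matrix_left_right_inverse by blast
  moreover have "(M ** transpose M)$i$j = M$i$1 * M$j$1 + M$i$2 * M$j$2 + M$i$3 * M$j$3"
    by (simp add: matrix_matrix_mult_def transpose_def sum_3)
  ultimately have e: "M$i$1 * M$j$1 + M$i$2 * M$j$2 + M$i$3 * M$j$3 = (if i = j then 1 else 0)"
    by (simp add: mat_def)
  have e': "(of_real (M$i$1) * of_real (M$j$1) + of_real (M$i$2) * of_real (M$j$2) + of_real (M$i$3) * of_real (M$j$3) :: complex) = (if i = j then 1 else 0)"
    by (simp only: of_real_mult[symmetric] of_real_add[symmetric] e) simp
  show "peval (PB i j) (iso_coords M y) = 0"
    unfolding iso_coords_def peval_PB
    using e' by (simp add: cmat_def)
qed

lemma inX_orth: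
  assumes "inX h M x y r"
  shows "transpose M ** M = mat (h^2)" "M ** transpose M = mat (h^2)"
proof -
  have a: "peval (PA i j) (coords h M x y r) = 0" for i j
    using assms hom_PA van_PA unfolding inX_def by blast
  have b: "peval (PB i j) (coords h M x y r) = 0" for i j
    using assms hom_PB van_PB unfolding inX_def by blast
  show "transpose M ** M = mat (h^2)"
  proof (simp add: vec_eq_iff, intro allI)
    fix i j
    show "(transpose M ** M)$i$j = mat (h^2) $i$j"
      using a[of i j] by (simp add: matrix_matrix_mult_def transpose_def sum_3 mat_def peval_PA power2_eq_square split: if_splits)
  qed
  show "M ** transpose M = mat (h^2)"
  proof (simp add: vec_eq_iff, intro allI)
    fix i j
    show "(M ** transpose M)$i$j = mat (h^2) $i$j"
      using b[of i j] by (simp add: matrix_matrix_mult_def transpose_def sum_3 mat_def peval_PB power2_eq_square split: if_splits)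
  qed
qed

lemma mat_mul_l: "(mat c ** (A::complex^3^3)) = (\<chi> i j. c * A$i$j)"
  by (simp add: vec_eq_iff matrix_matrix_mult_def mat_def sum_3 forall_3)

lemma mat_mul_r: "((A::complex^3^3) ** mat c) = (\<chi> i j. c * A$i$j)"
  by (simp add: vec_eq_iff matrix_matrix_mult_def mat_def sum_3 forall_3 mult.commute)

lemma mat_mulv: "(mat c *v (v::complex^3)) = c *s v"
  by (simp add: vec_eq_iff matrix_vector_mult_def mat_def sum_3 forall_3)

lemma mat_zero_iff: "c \<noteq> 0 \<Longrightarrow> (\<chi> i j. c * A$i$j) = (0::complex^3^3) \<longleftrightarrow> A = 0"
  by (simp add: vec_eq_iff)

lemma bil0: "bil 0 v = 0" "bil v 0 = 0" by (simp_all add: bil_def)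

theorem mainTheorem1:
  fixes h1 h2 r1 r2 :: complex and M1 M2 :: "complex^3^3" and x1 x2 y1 y2 :: "complex^3"
  assumes "inX h1 M1 x1 y1 r1" and "inX h2 M2 x2 y2 r2"
    and "h1 \<noteq> 0 \<or> h2 \<noteq> 0"
  shows "\<not> (h1 * h2 = 0 \<and> M1 ** M2 = 0 \<and>
             transpose M2 *v x1 + h1 *s x2 = 0 \<and>
             h2 *s y1 + M1 *v y2 = 0 \<and>
             h2 * r1 + h1 * r2 - 2 * bil x1 y2 = 0)"
proof
  assume H: "h1 * h2 = 0 \<and> M1 ** M2 = 0 \<and>
             transpose M2 *v x1 + h1 *s x2 = 0 \<and>
             h2 *s y1 + M1 *v y2 = 0 \<and>
             h2 * r1 + h1 * r2 - 2 * bil x1 y2 = 0"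
  have o1: "transpose M1 ** M1 = mat (h1^2)" "M1 ** transpose M1 = mat (h1^2)"
    using inX_orth[OF assms(1)] by auto
  have o2: "transpose M2 ** M2 = mat (h2^2)" "M2 ** transpose M2 = mat (h2^2)"
    using inX_orth[OF assms(2)] by auto
  show False
  proof (cases "h1 = 0")
    case False
    hence h2: "h2 = 0" using H by simp
    have hh: "h1^2 \<noteq> 0" using False by simp
    have "mat (h1^2) ** M2 = transpose M1 ** (M1 ** M2)"
      by (simp add: o1 matrix_mul_assoc)
    also have "\<dots> = 0" using H by simp
    finally have M2: "M2 = 0" using mat_zero_iff[OF hh] by (simp add: mat_mul_l)
    have x2: "x2 = 0" using H M2 False by (simp add: vec_eq_iff)
    have "h1^2 *s y2 = transpose M1 *v (M1 *v y2)"
      by (simp add: matrix_vector_mul_assoc o1 mat_mulv)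
    also have "\<dots> = 0" using H h2 by simp
    finally have y2: "y2 = 0" using hh by (simp add: vec_eq_iff)
    have r2: "r2 = 0" using H h2 y2 False by (simp add: bil0)
    show False using assms(2) h2 M2 x2 y2 r2 by (simp add: inX_def)
  next
    case True
    hence h2: "h2 \<noteq> 0" using assms(3) by simp
    have hh: "h2^2 \<noteq> 0" using h2 by simp
    have "M1 ** mat (h2^2) = (M1 ** M2) ** transpose M2"
      by (simp add: o2(2)[symmetric] matrix_mul_assoc)
    also have "\<dots> = 0" using H by simp
    finally have M1: "M1 = 0" using mat_zero_iff[OF hh] by (simp add: mat_mul_r)
    have "h2^2 *s x1 = M2 *v (transpose M2 *v x1)"
      by (simp only: matrix_vector_mul_assoc o2 mat_mulv)
    also have "\<dots> = 0"
    proof -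
      have "transpose M2 *v x1 = 0" using H True by (simp del: vector_transpose_matrix)
      thus ?thesis by simp
    qed
    finally have x1: "x1 = 0" using hh by (simp add: vec_eq_iff)
    have y1: "y1 = 0" using H M1 h2 by (simp add: vec_eq_iff)
    have r1: "r1 = 0" using H True x1 h2 by (simp add: bil0)
    show False using assms(1) True M1 x1 y1 r1 by (simp add: inX_def)
  qed
qed

end
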